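(* For every integer $k\ge2$ and $\varepsilon>0$ there is $\delta=\delta(\varepsilon,k,\Omega)>0$ such that for all sufficiently large $n$ the following holds. Let $\mu\in\mathcal P(\Omega^n)$ be $\delta$-regular with respect to a partition $\vec V=(V_1,\dots,V_m)$ of $[n]$ and set $\bar\mu_i=\langle\boldsymbol\sigma[\cdot|V_i]\rangle_\mu\in\mathcal P(\Omega)$ for $i\in[m]$. If $\sum_{i\in[m]}\frac{|V_i|}{n}\langle\|\boldsymbol\sigma[\cdot|V_i]-\bar\mu_i\|_{TV}\rangle_\mu<\delta$, then $\mu$ is $(\varepsilon,k)$-symmetric.
   Context: $\Omega$ is a fixed finite nonempty set, $\mathcal P(\mathcal X)$ the set of probability measures on a finite set $\mathcal X$, $\|\cdot\|_{TV}$ total variation. For $\sigma\in\Omega^n$, nonempty $S\subset[n]$ and $\omega\in\Omega$, $\sigma[\omega|S]=|\sigma^{-1}(\omega)\cap S|/|S|$; $\langle X(\boldsymbol\sigma)\rangle_\mu=\sum_\sigma\mu(\sigma)X(\sigma)$ (applied coordinatewise to vector-valued $X$). $\mu$ is $\delta$-regular on $U\subset[n]$ if for every $S\subset U$ with $|S|\ge\delta|U|$, $\langle\|\boldsymbol\sigma[\cdot|S]-\boldsymbol\sigma[\cdot|U]\|_{TV}\rangle_\mu<\delta$; $\mu$ is $\delta$-regular with respect to $\vec V$ if there is $J\subset[m]$ with $\sum_{i\notin J}|V_i|<\delta n$ such that $\mu$ is $\delta$-regular on $V_i$ for all $i\in J$. For $x_1,\dots,x_k\in[n]$ let $\mu_{\downarrow\{x_1,\dots,x_k\}}$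 be the joint law of $(\boldsymbol\sigma(x_1),\dots,\boldsymbol\sigma(x_k))$ and $\mu_{\downarrow x}$ the law of $\boldsymbol\sigma(x)$, $\boldsymbol\sigma\sim\mu$. $\mu$ is $(\varepsilon,k)$-symmetric if $\frac1{n^k}\sum_{x_1,\dots,x_k\in[n]}\|\mu_{\downarrow\{x_1,\dots,x_k\}}-\mu_{\downarrow x_1}\otimes\cdots\otimes\mu_{\downarrow x_k}\|_{TV}<\varepsilon$. *)

theory Defs
  imports Complex_Main "HOL-Library.FuncSet"
begin

text \<open>Omega is a finite (nonempty) type 'o. Configurations sigma in Omega^n are
  extensional functions on [n] = {1..n}.\<close>

definition cfg :: "nat \<Rightarrow> (nat \<Rightarrow> 'o) set" where
  "cfg n = {1..n} \<rightarrow>\<^sub>E (UNIV :: 'o set)"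

definition is_prob :: "nat \<Rightarrow> ((nat \<Rightarrow> 'o) \<Rightarrow> real) \<Rightarrow> bool" where
  "is_prob n \<mu> \<longleftrightarrow> (\<forall>\<sigma>\<in>cfg n. \<mu> \<sigma> \<ge> 0) \<and> (\<Sum>\<sigma>\<in>cfg n. \<mu> \<sigma>) = 1"

definition expect :: "nat \<Rightarrow> ((nat \<Rightarrow> 'o) \<Rightarrow> real) \<Rightarrow> ((nat \<Rightarrow> 'o) \<Rightarrow> real) \<Rightarrow> real" where
  "expect n \<mu> X = (\<Sum>\<sigma>\<in>cfg n. \<mu> \<sigma> * X \<sigma>)"

definition frac :: "(nat \<Rightarrow> 'o) \<Rightarrow> nat set \<Rightarrow> 'o \<Rightarrow> real" where
  "frac \<sigma> S \<omega> = real (card {x\<in>S. \<sigma> x = \<omega>}) / real (card S)"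

definition tv :: "'a set \<Rightarrow> ('a \<Rightarrow> real) \<Rightarrow> ('a \<Rightarrow> real) \<Rightarrow> real" where
  "tv A p q = (1/2) * (\<Sum>a\<in>A. \<bar>p a - q a\<bar>)"

definition regular_on :: "nat \<Rightarrow> real \<Rightarrow> ((nat \<Rightarrow> 'o) \<Rightarrow> real) \<Rightarrow> nat set \<Rightarrow> bool" where
  "regular_on n \<delta> \<mu> U \<longleftrightarrow>
     (\<forall>S. S \<subseteq> U \<and> real (card S) \<ge> \<delta> * real (card U) \<longrightarrow>
        expect n \<mu> (\<lambda>\<sigma>. tv (UNIV :: 'o set) (frac \<sigma> S) (frac \<sigma> U)) < \<delta>)"

definition regular_wrt :: "nat \<Rightarrow> real \<Rightarrow> ((nat \<Rightarrow> 'o) \<Rightarrow> real) \<Rightarrow> nat \<Rightarrow> (nat \<Rightarrow> nat set) \<Rightarrow> bool" where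
  "regular_wrt n \<delta> \<mu> m V \<longleftrightarrow>
     (\<exists>J \<subseteq> {1..m}. real (\<Sum>i\<in>{1..m} - J. card (V i)) < \<delta> * real n \<and>
        (\<forall>i\<in>J. regular_on n \<delta> \<mu> (V i)))"

definition is_partition :: "nat \<Rightarrow> nat \<Rightarrow> (nat \<Rightarrow> nat set) \<Rightarrow> bool" where
  "is_partition n m V \<longleftrightarrow>
     (\<forall>i\<in>{1..m}. V i \<noteq> {}) \<and>
     (\<forall>i\<in>{1..m}. \<forall>j\<in>{1..m}. i \<noteq> j \<longrightarrow> V i \<inter> V j = {}) \<and>
     (\<Union>i\<in>{1..m}. V i) = {1..n}"

definition joint :: "nat \<Rightarrow> ((nat \<Rightarrow> 'o) \<Rightarrow> real) \<Rightarrow> nat list \<Rightarrow> 'o list \<Rightarrow> real" where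
  "joint n \<mu> xs ws = (\<Sum>\<sigma>\<in>{\<sigma>\<in>cfg n. map \<sigma> xs = ws}. \<mu> \<sigma>)"

definition marg :: "nat \<Rightarrow> ((nat \<Rightarrow> 'o) \<Rightarrow> real) \<Rightarrow> nat \<Rightarrow> 'o \<Rightarrow> real" where
  "marg n \<mu> x w = (\<Sum>\<sigma>\<in>{\<sigma>\<in>cfg n. \<sigma> x = w}. \<mu> \<sigma>)"

definition prod_marg :: "nat \<Rightarrow> ((nat \<Rightarrow> 'o) \<Rightarrow> real) \<Rightarrow> nat list \<Rightarrow> 'o list \<Rightarrow> real" where
  "prod_marg n \<mu> xs ws = (\<Prod>j<length xs. marg n \<mu> (xs ! j) (ws ! j))"

definition symmetric :: "nat \<Rightarrow> real \<Rightarrow> nat \<Rightarrow> ((nat \<Rightarrow> 'o) \<Rightarrow> real) \<Rightarrow> bool" where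
  "symmetric n \<epsilon> k \<mu> \<longleftrightarrow>
     (1 / real n ^ k) * (\<Sum>xs\<in>{xs. set xs \<subseteq> {1..n} \<and> length xs = k}.
        tv {ws :: 'o list. length ws = k} (joint n \<mu> xs) (prod_marg n \<mu> xs)) < \<epsilon>"

end

theory Submission
  imports Defs
begin

lemma fin_cfg: "finite (cfg n :: (nat \<Rightarrow> 'o::finite) set)"
  unfolding cfg_def by (intro finite_PiE) auto

lemma frac_alt: "finite S \<Longrightarrow> frac \<sigma> S w = (\<Sum>x\<in>S. if \<sigma> x = w then 1 else 0) / real (card S)"
  unfolding frac_def by (simp add: sum.inter_filter[symmetric])

lemma tv_nonneg: "tv A p q \<ge> 0"
  unfolding tv_def by (simp add: sum_nonneg)

lemma tv_pt: "finite A \<Longrightarrow> w \<in> A \<Longrightarrow> \<bar>p w - q w\<bar> \<le> 2 * tv A p q"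
  unfolding tv_def using member_le_sum[of w A "\<lambda>a. \<bar>p a - q a\<bar>"] by simp

lemma sum_abs_split:
  fixes f :: "'a \<Rightarrow> real"
  assumes "finite V" "\<And>S. S \<subseteq> V \<Longrightarrow> \<bar>\<Sum>x\<in>S. f x\<bar> \<le> c"
  shows "(\<Sum>x\<in>V. \<bar>f x\<bar>) \<le> 2 * c"
proof -
  have e: "(\<Sum>x\<in>V. \<bar>f x\<bar>) = (\<Sum>x\<in>{x\<in>V. f x \<ge> 0}. f x) - (\<Sum>x\<in>{x\<in>V. \<not> f x \<ge> 0}. f x)"
    using assms(1) by (simp add: sum.inter_filter sum_subtractf[symmetric] abs_if, intro sum.cong) auto
  have "(\<Sum>x\<in>{x\<in>V. f x \<ge> 0}. f x) \<le> c" using assms(2)[of "{x\<in>V. f x \<ge> 0}"] by auto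
  moreover have "- (\<Sum>x\<in>{x\<in>V. \<not> f x \<ge> 0}. f x) \<le> c" using assms(2)[of "{x\<in>V. \<not> f x \<ge> 0}"] by auto
  ultimately show ?thesis using e by linarith
qed

lemma frac_01: "finite S \<Longrightarrow> 0 \<le> frac \<sigma> S w \<and> frac \<sigma> S w \<le> 1"
  unfolding frac_def
  by (cases "card S = 0") (auto simp: divide_le_eq_1 card_mono)

lemma sum_ind: "(\<Sum>w\<in>(UNIV::'o::finite set). if \<sigma> x = w then (1::real) else 0) = 1"
  by (simp add: sum.delta)

lemma sum_frac: "finite S \<Longrightarrow> S \<noteq> {} \<Longrightarrow> (\<Sum>w\<in>UNIV. frac \<sigma> S (w::'o::finite)) = 1"
proof -
  assume a: "finite S" "S \<noteq> {}"
  have "(\<Sum>w\<in>(UNIV::'o set). \<Sum>x\<in>S. if \<sigma> x = w then (1::real) else 0) = (\<Sum>x\<in>S. \<Sum>w\<in>UNIV. if \<sigma> x = w then (1::real) else 0)"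
    by (rule sum.swap)
  also have "\<dots> = real (card S)" by (simp add: sum_ind)
  finally show ?thesis using a by (simp add: frac_alt sum_divide_distrib[symmetric])
qed

lemma sum_ind_frac: "finite S \<Longrightarrow> (\<Sum>x\<in>S. if \<sigma> x = w then 1 else 0) = real (card S) * frac \<sigma> S w"
  by (cases "S = {}") (auto simp: frac_alt)

definition AA :: "nat \<Rightarrow> ((nat \<Rightarrow> 'o) \<Rightarrow> real) \<Rightarrow> ((nat \<Rightarrow> 'o) \<Rightarrow> real) \<Rightarrow> nat \<Rightarrow> 'o \<Rightarrow> real" where
  "AA n \<mu> g x w = expect n \<mu> (\<lambda>\<sigma>. g \<sigma> * (if \<sigma> x = w then 1 else 0))"
definition mbar :: "nat \<Rightarrow> ((nat \<Rightarrow> 'o) \<Rightarrow> real) \<Rightarrow> nat set \<Rightarrow> 'o \<Rightarrow> real" where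
  "mbar n \<mu> V w = expect n \<mu> (\<lambda>\<tau>. frac \<tau> V w)"
definition TT :: "nat \<Rightarrow> ((nat \<Rightarrow> 'o) \<Rightarrow> real) \<Rightarrow> nat set \<Rightarrow> real" where
  "TT n \<mu> V = expect n \<mu> (\<lambda>\<sigma>. tv UNIV (frac \<sigma> V) (mbar n \<mu> V))"

context
  fixes n :: nat and \<mu> :: "(nat \<Rightarrow> 'o::finite) \<Rightarrow> real"
  assumes prob: "is_prob n \<mu>"
begin

lemma mu_nn: "\<sigma> \<in> cfg n \<Longrightarrow> \<mu> \<sigma> \<ge> 0" using prob unfolding is_prob_def by auto
lemma mu_sum: "(\<Sum>\<sigma>\<in>cfg n. \<mu> \<sigma>) = 1" using prob unfolding is_prob_def by auto

lemma ex_mono: "(\<And>\<sigma>. \<sigma> \<in> cfg n \<Longrightarrow> X \<sigma> \<le> Y \<sigma>) \<Longrightarrow> expect n \<mu> X \<le> expect n \<mu> Y"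
  unfolding expect_def by (intro sum_mono mult_left_mono) (auto simp: mu_nn)

lemma ex_const: "expect n \<mu> (\<lambda>_. c) = c"
  unfolding expect_def by (simp add: sum_distrib_right[symmetric] mu_sum)

lemma ex_add: "expect n \<mu> (\<lambda>\<sigma>. X \<sigma> + Y \<sigma>) = expect n \<mu> X + expect n \<mu> Y"
  unfolding expect_def by (simp add: distrib_left sum.distrib)

lemma ex_diff: "expect n \<mu> (\<lambda>\<sigma>. X \<sigma> - Y \<sigma>) = expect n \<mu> X - expect n \<mu> Y"
  unfolding expect_def by (simp add: right_diff_distrib sum_subtractf)

lemma ex_cmult: "expect n \<mu> (\<lambda>\<sigma>. c * X \<sigma>) = c * expect n \<mu> X"
  unfolding expect_def by (simp add: sum_distrib_left mult_ac)

lemma ex_sum: "expect n \<mu> (\<lambda>\<sigma>. \<Sum>x\<in>S. X x \<sigma>) = (\<Sum>x\<in>S. expect n \<mu> (X x))"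
  unfolding expect_def by (simp add: sum_distrib_left sum.swap[of _ S])

lemma ex_abs: "\<bar>expect n \<mu> X\<bar> \<le> expect n \<mu> (\<lambda>\<sigma>. \<bar>X \<sigma>\<bar>)"
  unfolding expect_def
  by (rule order_trans[OF sum_abs]) (auto intro!: sum_mono simp: abs_mult mu_nn)

lemma ex_nn: "(\<And>\<sigma>. \<sigma> \<in> cfg n \<Longrightarrow> 0 \<le> X \<sigma>) \<Longrightarrow> 0 \<le> expect n \<mu> X"
  using ex_mono[of "\<lambda>_. 0" X] ex_const by simp

lemma ex_le1: "(\<And>\<sigma>. \<sigma> \<in> cfg n \<Longrightarrow> X \<sigma> \<le> 1) \<Longrightarrow> expect n \<mu> X \<le> 1"
  using ex_mono[of X "\<lambda>_. 1"] ex_const by simp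


lemma AA_01: "(\<And>\<sigma>. \<sigma> \<in> cfg n \<Longrightarrow> 0 \<le> g \<sigma> \<and> g \<sigma> \<le> 1) \<Longrightarrow> 0 \<le> AA n \<mu> g x w \<and> AA n \<mu> g x w \<le> 1"
  unfolding AA_def by (intro conjI ex_nn ex_le1) auto

lemma mbar_01: "finite V \<Longrightarrow> 0 \<le> mbar n \<mu> V w \<and> mbar n \<mu> V w \<le> 1"
  unfolding mbar_def by (intro conjI ex_nn ex_le1) (simp_all add: frac_01)

lemma TT_nn: "0 \<le> TT n \<mu> V"
  unfolding TT_def by (intro ex_nn tv_nonneg)

lemma g_01: "(\<And>\<sigma>. \<sigma> \<in> cfg n \<Longrightarrow> 0 \<le> g \<sigma> \<and> g \<sigma> \<le> 1) \<Longrightarrow> 0 \<le> expect n \<mu> g \<and> expect n \<mu> g \<le> 1"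
  by (intro conjI ex_nn ex_le1) auto

lemma sum_mbar: "finite V \<Longrightarrow> V \<noteq> {} \<Longrightarrow> (\<Sum>w\<in>UNIV. mbar n \<mu> V (w::'o)) = 1"
  unfolding mbar_def by (simp add: ex_sum[symmetric] sum_frac ex_const)

lemma sum_AA: "(\<Sum>w\<in>UNIV. AA n \<mu> g x (w::'o)) = expect n \<mu> g"
  unfolding AA_def by (simp add: ex_sum[symmetric] sum_distrib_left[symmetric] sum_ind)

lemma sumS_AA: "finite S \<Longrightarrow> (\<Sum>x\<in>S. AA n \<mu> g x w) = real (card S) * expect n \<mu> (\<lambda>\<sigma>. g \<sigma> * frac \<sigma> S w)"
  unfolding AA_def by (simp add: ex_sum[symmetric] sum_distrib_left[symmetric] sum_ind_frac ex_cmult[symmetric] mult_ac)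


lemma part_bound:
  assumes g: "\<And>\<sigma>. \<sigma> \<in> cfg n \<Longrightarrow> 0 \<le> g \<sigma> \<and> g \<sigma> \<le> 1"
    and reg: "regular_on n \<delta> \<mu> V" and fV: "finite V" and S: "S \<subseteq> V" and d: "\<delta> > 0"
  shows "\<bar>\<Sum>x\<in>S. AA n \<mu> g x w - mbar n \<mu> V w * expect n \<mu> g\<bar> \<le> real (card V) * (2*\<delta> + 2*TT n \<mu> V)"
proof (cases "real (card S) \<ge> \<delta> * real (card V)")
  case True
  have fS: "finite S" using fV S finite_subset by blast
  have E: "expect n \<mu> (\<lambda>\<sigma>. tv UNIV (frac \<sigma> S) (frac \<sigma> V)) < \<delta>"
    using reg True S unfolding regular_on_def by auto
  have e1: "expect n \<mu> (\<lambda>\<sigma>. g \<sigma> * (frac \<sigma> S w - mbar n \<mu> V w)) = expect n \<mu> (\<lambda>\<sigma>. g \<sigma> * frac \<sigma> S w) - mbar n \<mu> V w * expect n \<mu> g"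
    using ex_diff[of "\<lambda>\<sigma>. g \<sigma> * frac \<sigma> S w" "\<lambda>\<sigma>. mbar n \<mu> V w * g \<sigma>"] ex_cmult[of "mbar n \<mu> V w" g]
    by (simp add: algebra_simps)
  have e2: "(\<Sum>x\<in>S. AA n \<mu> g x w - mbar n \<mu> V w * expect n \<mu> g) = real (card S) * expect n \<mu> (\<lambda>\<sigma>. g \<sigma> * (frac \<sigma> S w - mbar n \<mu> V w))"
    unfolding e1 by (simp add: sum_subtractf sumS_AA fS algebra_simps)
  have pt: "\<bar>g \<sigma> * (frac \<sigma> S w - mbar n \<mu> V w)\<bar> \<le> 2 * tv UNIV (frac \<sigma> S) (frac \<sigma> V) + 2 * tv UNIV (frac \<sigma> V) (mbar n \<mu> V)"
    if "\<sigma> \<in> cfg n" for \<sigma>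
  proof -
    have "\<bar>g \<sigma> * (frac \<sigma> S w - mbar n \<mu> V w)\<bar> \<le> \<bar>frac \<sigma> S w - mbar n \<mu> V w\<bar>"
      using g[OF that] by (simp add: abs_mult mult_left_le_one_le)
    also have "\<dots> \<le> \<bar>frac \<sigma> S w - frac \<sigma> V w\<bar> + \<bar>frac \<sigma> V w - mbar n \<mu> V w\<bar>" by linarith
    also have "\<dots> \<le> 2 * tv UNIV (frac \<sigma> S) (frac \<sigma> V) + 2 * tv UNIV (frac \<sigma> V) (mbar n \<mu> V)"
      by (intro add_mono tv_pt) auto
    finally show ?thesis .
  qed
  have "\<bar>expect n \<mu> (\<lambda>\<sigma>. g \<sigma> * (frac \<sigma> S w - mbar n \<mu> V w))\<bar> \<le> expect n \<mu> (\<lambda>\<sigma>. 2 * tv UNIV (frac \<sigma> S) (frac \<sigma> V) + 2 * tv UNIV (frac \<sigma> V) (mbar n \<mu> V))"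
    by (rule order_trans[OF ex_abs ex_mono]) (rule pt)
  also have "\<dots> = 2 * expect n \<mu> (\<lambda>\<sigma>. tv UNIV (frac \<sigma> S) (frac \<sigma> V)) + 2 * TT n \<mu> V"
    unfolding TT_def ex_add ex_cmult ..
  also have "\<dots> \<le> 2*\<delta> + 2*TT n \<mu> V" using E by simp
  finally have b: "\<bar>expect n \<mu> (\<lambda>\<sigma>. g \<sigma> * (frac \<sigma> S w - mbar n \<mu> V w))\<bar> \<le> 2*\<delta> + 2*TT n \<mu> V" .
  have cs: "real (card S) \<le> real (card V)" using card_mono[OF fV S] by simp
  have "\<bar>\<Sum>x\<in>S. AA n \<mu> g x w - mbar n \<mu> V w * expect n \<mu> g\<bar> \<le> real (card S) * (2*\<delta> + 2*TT n \<mu> V)"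
    unfolding e2 abs_mult using b by (simp add: mult_left_mono)
  also have "\<dots> \<le> real (card V) * (2*\<delta> + 2*TT n \<mu> V)"
    using cs d TT_nn by (intro mult_right_mono) auto
  finally show ?thesis .
next
  case False
  have pt: "\<bar>AA n \<mu> g x w - mbar n \<mu> V w * expect n \<mu> g\<bar> \<le> 1" for x
  proof -
    have "0 \<le> AA n \<mu> g x w \<and> AA n \<mu> g x w \<le> 1" using AA_01 g by blast
    moreover have "0 \<le> mbar n \<mu> V w * expect n \<mu> g \<and> mbar n \<mu> V w * expect n \<mu> g \<le> 1"
      using mbar_01[OF fV, of w] g_01[OF g] by (simp add: mult_le_one)
    ultimately show ?thesis by linarith
  qed
  have "\<bar>\<Sum>x\<in>S. AA n \<mu> g x w - mbar n \<mu> V w * expect n \<mu> g\<bar> \<le> (\<Sum>x\<in>S. 1)"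
    by (rule order_trans[OF sum_abs sum_mono]) (rule pt)
  also have "\<dots> = real (card S)" by simp
  also have "\<dots> \<le> real (card V) * (2*\<delta> + 2*TT n \<mu> V)"
  proof -
    have "real (card V) * \<delta> \<le> real (card V) * (2*\<delta> + 2*TT n \<mu> V)"
      using d TT_nn[of V] by (intro mult_left_mono) auto
    thus ?thesis using False by (simp add: mult.commute)
  qed
  finally show ?thesis .
qed


lemma P_good:
  assumes g: "\<And>\<sigma>. \<sigma> \<in> cfg n \<Longrightarrow> 0 \<le> g \<sigma> \<and> g \<sigma> \<le> 1"
    and reg: "regular_on n \<delta> \<mu> V" and fV: "finite V" and d: "\<delta> > 0"
  shows "(\<Sum>x\<in>V. \<Sum>w\<in>(UNIV::'o set). \<bar>AA n \<mu> g x w - mbar n \<mu> V w * expect n \<mu> g\<bar>)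
     \<le> 4 * real (card (UNIV::'o set)) * real (card V) * (\<delta> + TT n \<mu> V)"
proof -
  have "(\<Sum>x\<in>V. \<Sum>w\<in>(UNIV::'o set). \<bar>AA n \<mu> g x w - mbar n \<mu> V w * expect n \<mu> g\<bar>)
     = (\<Sum>w\<in>(UNIV::'o set). \<Sum>x\<in>V. \<bar>AA n \<mu> g x w - mbar n \<mu> V w * expect n \<mu> g\<bar>)"
    by (rule sum.swap)
  also have "\<dots> \<le> (\<Sum>w\<in>(UNIV::'o set). 2 * (real (card V) * (2*\<delta> + 2*TT n \<mu> V)))"
    by (intro sum_mono sum_abs_split fV part_bound[OF g reg fV _ d])
  also have "\<dots> = 4 * real (card (UNIV::'o set)) * real (card V) * (\<delta> + TT n \<mu> V)" by (simp add: algebra_simps)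
  finally show ?thesis .
qed

lemma P_bad:
  assumes g: "\<And>\<sigma>. \<sigma> \<in> cfg n \<Longrightarrow> 0 \<le> g \<sigma> \<and> g \<sigma> \<le> 1"
    and fV: "finite V" "V \<noteq> {}"
  shows "(\<Sum>x\<in>V. \<Sum>w\<in>(UNIV::'o set). \<bar>AA n \<mu> g x w - mbar n \<mu> V w * expect n \<mu> g\<bar>) \<le> 2 * real (card V)"
proof -
  have "(\<Sum>w\<in>(UNIV::'o set). \<bar>AA n \<mu> g x w - mbar n \<mu> V w * expect n \<mu> g\<bar>) \<le> 2" for x
  proof -
    have "(\<Sum>w\<in>(UNIV::'o set). \<bar>AA n \<mu> g x w - mbar n \<mu> V w * expect n \<mu> g\<bar>)
       \<le> (\<Sum>w\<in>(UNIV::'o set). AA n \<mu> g x w + mbar n \<mu> V w * expect n \<mu> g)"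
    proof (rule sum_mono)
      fix w :: 'o
      have "0 \<le> AA n \<mu> g x w" using AA_01 g by blast
      moreover have "0 \<le> mbar n \<mu> V w * expect n \<mu> g"
        using mbar_01[OF fV(1), of w] g_01[OF g] by simp
      ultimately show "\<bar>AA n \<mu> g x w - mbar n \<mu> V w * expect n \<mu> g\<bar> \<le> AA n \<mu> g x w + mbar n \<mu> V w * expect n \<mu> g"
        by linarith
    qed
    also have "\<dots> = 2 * expect n \<mu> g"
      by (simp add: sum.distrib sum_AA sum_distrib_right[symmetric] sum_mbar fV)
    also have "\<dots> \<le> 2" using g_01[OF g] by simp
    finally show ?thesis .
  qed
  hence "(\<Sum>x\<in>V. \<Sum>w\<in>(UNIV::'o set). \<bar>AA n \<mu> g x w - mbar n \<mu> V w * expect n \<mu> g\<bar>) \<le> (\<Sum>x\<in>V. 2)"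
    by (intro sum_mono)
  thus ?thesis by simp
qed

lemma marg_AA: "marg n \<mu> x w = AA n \<mu> (\<lambda>_. 1) x w"
  unfolding marg_def AA_def expect_def by (simp add: sum.inter_filter[OF fin_cfg], intro sum.cong) auto


lemma global:
  assumes g: "\<And>\<sigma>. \<sigma> \<in> cfg n \<Longrightarrow> 0 \<le> g \<sigma> \<and> g \<sigma> \<le> 1"
    and part: "is_partition n m V" and J: "J \<subseteq> {1..m}"
    and Jb: "real (\<Sum>i\<in>{1..m} - J. card (V i)) < \<delta> * real n"
    and regJ: "\<forall>i\<in>J. regular_on n \<delta> \<mu> (V i)"
    and hyp: "(\<Sum>i\<in>{1..m}. real (card (V i)) / real n * TT n \<mu> (V i)) < \<delta>"
    and n: "n > 0" and d: "\<delta> > 0"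
  shows "(\<Sum>x\<in>{1..n}. \<Sum>w\<in>(UNIV::'o set). \<bar>AA n \<mu> g x w - marg n \<mu> x w * expect n \<mu> g\<bar>)
    \<le> 2 * (8 * real (card (UNIV::'o set)) + 2) * \<delta> * real n"
proof -
  let ?C = "real (card (UNIV::'o set))"
  have Vne: "i \<in> {1..m} \<Longrightarrow> V i \<noteq> {}" for i using part unfolding is_partition_def by auto
  have disj: "\<forall>i\<in>{1..m}. \<forall>j\<in>{1..m}. i \<noteq> j \<longrightarrow> V i \<inter> V j = {}" using part unfolding is_partition_def by auto
  have un: "(\<Union>i\<in>{1..m}. V i) = {1..n}" using part unfolding is_partition_def by auto
  have fV: "i \<in> {1..m} \<Longrightarrow> finite (V i)" for i
    by (rule finite_subset[of _ "{1..n}"]) (use un in auto)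
  have cardsum: "(\<Sum>i\<in>{1..m}. card (V i)) = n"
    using card_UN_disjoint[of "{1..m}" V] fV disj un by simp
  define Q where "Q i = (if i \<in> J then 4 * ?C * real (card (V i)) * (\<delta> + TT n \<mu> (V i)) else 2 * real (card (V i)))" for i
  define P where "P h i = (\<Sum>x\<in>V i. \<Sum>w\<in>(UNIV::'o set). \<bar>AA n \<mu> h x w - mbar n \<mu> (V i) w * expect n \<mu> h\<bar>)" for h i
  have PQ: "P h i \<le> Q i" if i: "i \<in> {1..m}" and h: "\<And>\<sigma>. \<sigma> \<in> cfg n \<Longrightarrow> 0 \<le> h \<sigma> \<and> h \<sigma> \<le> 1" for h i
  proof (cases "i \<in> J")
    case True
    then show ?thesis unfolding P_def Q_def using P_good[OF h _ fV[OF i] d] regJ by simp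
  next
    case False
    then show ?thesis unfolding P_def Q_def using P_bad[OF h fV[OF i] Vne[OF i]] by simp
  qed
  have one: "\<And>\<sigma>. \<sigma> \<in> cfg n \<Longrightarrow> 0 \<le> (\<lambda>_. 1::real) \<sigma> \<and> (\<lambda>_. 1::real) \<sigma> \<le> 1" by simp
  have G: "0 \<le> expect n \<mu> g" "expect n \<mu> g \<le> 1" using g_01[OF g] by auto
  have perpart: "(\<Sum>x\<in>V i. \<Sum>w\<in>(UNIV::'o set). \<bar>AA n \<mu> g x w - marg n \<mu> x w * expect n \<mu> g\<bar>) \<le> 2 * Q i"
    if i: "i \<in> {1..m}" for i
  proof -
    have "(\<Sum>x\<in>V i. \<Sum>w\<in>(UNIV::'o set). \<bar>AA n \<mu> g x w - marg n \<mu> x w * expect n \<mu> g\<bar>) \<le> P g i + P (\<lambda>_. 1) i"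
      unfolding P_def sum.distrib[symmetric]
    proof (intro sum_mono)
      fix x w
      have "\<bar>AA n \<mu> g x w - marg n \<mu> x w * expect n \<mu> g\<bar>
        \<le> \<bar>AA n \<mu> g x w - mbar n \<mu> (V i) w * expect n \<mu> g\<bar> + expect n \<mu> g * \<bar>marg n \<mu> x w - mbar n \<mu> (V i) w\<bar>"
      proof -
        have "AA n \<mu> g x w - marg n \<mu> x w * expect n \<mu> g = (AA n \<mu> g x w - mbar n \<mu> (V i) w * expect n \<mu> g) - expect n \<mu> g * (marg n \<mu> x w - mbar n \<mu> (V i) w)"
          by (simp add: algebra_simps)
        moreover have "\<bar>expect n \<mu> g * (marg n \<mu> x w - mbar n \<mu> (V i) w)\<bar> = expect n \<mu> g * \<bar>marg n \<mu> x w - mbar n \<mu> (V i) w\<bar>"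
          using G by (simp add: abs_mult)
        ultimately show ?thesis by (metis abs_triangle_ineq4)
      qed
      also have "\<dots> \<le> \<bar>AA n \<mu> g x w - mbar n \<mu> (V i) w * expect n \<mu> g\<bar> + \<bar>marg n \<mu> x w - mbar n \<mu> (V i) w\<bar>"
        using G by (simp add: mult_left_le_one_le)
      finally show "\<bar>AA n \<mu> g x w - marg n \<mu> x w * expect n \<mu> g\<bar>
        \<le> \<bar>AA n \<mu> g x w - mbar n \<mu> (V i) w * expect n \<mu> g\<bar> + \<bar>AA n \<mu> (\<lambda>_. 1) x w - mbar n \<mu> (V i) w * expect n \<mu> (\<lambda>_. 1)\<bar>"
        by (simp add: ex_const marg_AA)
    qed
    also have "\<dots> \<le> 2 * Q i"
    proof -
      have "P g i \<le> Q i" by (rule PQ[OF i]) (rule g)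
      moreover have "P (\<lambda>_. 1) i \<le> Q i" by (rule PQ[OF i]) simp
      ultimately show ?thesis by simp
    qed
    finally show ?thesis .
  qed
  have "(\<Sum>x\<in>{1..n}. \<Sum>w\<in>(UNIV::'o set). \<bar>AA n \<mu> g x w - marg n \<mu> x w * expect n \<mu> g\<bar>)
     = (\<Sum>i\<in>{1..m}. \<Sum>x\<in>V i. \<Sum>w\<in>(UNIV::'o set). \<bar>AA n \<mu> g x w - marg n \<mu> x w * expect n \<mu> g\<bar>)"
    unfolding un[symmetric] by (rule sum.UNION_disjoint) (use fV disj in auto)
  also have "\<dots> \<le> (\<Sum>i\<in>{1..m}. 2 * Q i)" by (rule sum_mono) (rule perpart)
  also have "\<dots> = 2 * (\<Sum>i\<in>{1..m}. Q i)" by (simp add: sum_distrib_left)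
  finally have L: "(\<Sum>x\<in>{1..n}. \<Sum>w\<in>(UNIV::'o set). \<bar>AA n \<mu> g x w - marg n \<mu> x w * expect n \<mu> g\<bar>) \<le> 2 * (\<Sum>i\<in>{1..m}. Q i)" .
  have QB: "(\<Sum>i\<in>{1..m}. Q i) \<le> (8 * ?C + 2) * \<delta> * real n"
  proof -
    have split: "(\<Sum>i\<in>{1..m}. Q i) = (\<Sum>i\<in>J. 4 * ?C * real (card (V i)) * (\<delta> + TT n \<mu> (V i)))
        + (\<Sum>i\<in>{1..m} - J. 2 * real (card (V i)))"
      unfolding Q_def sum.If_cases[OF finite_atLeastAtMost] 
      by (intro arg_cong2[where f="(+)"] sum.cong) (use J in auto)
    have a: "(\<Sum>i\<in>J. real (card (V i))) \<le> real n"
    proof -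
      have "(\<Sum>i\<in>J. real (card (V i))) \<le> (\<Sum>i\<in>{1..m}. real (card (V i)))"
        by (rule sum_mono2) (use J in auto)
      also have "\<dots> = real n" using cardsum by (metis of_nat_sum)
      finally show ?thesis .
    qed
    have b: "(\<Sum>i\<in>J. real (card (V i)) * TT n \<mu> (V i)) \<le> \<delta> * real n"
    proof -
      have "(\<Sum>i\<in>J. real (card (V i)) * TT n \<mu> (V i)) \<le> (\<Sum>i\<in>{1..m}. real (card (V i)) * TT n \<mu> (V i))"
        by (rule sum_mono2) (use J TT_nn in auto)
      also have "\<dots> = real n * (\<Sum>i\<in>{1..m}. real (card (V i)) / real n * TT n \<mu> (V i))"
        using n by (simp add: sum_distrib_left)
      also have "\<dots> \<le> real n * \<delta>" using hyp n by (intro mult_left_mono) auto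
      finally show ?thesis by (simp add: mult.commute)
    qed
    have c: "(\<Sum>i\<in>J. 4 * ?C * real (card (V i)) * (\<delta> + TT n \<mu> (V i)))
       = 4 * ?C * (\<delta> * (\<Sum>i\<in>J. real (card (V i))) + (\<Sum>i\<in>J. real (card (V i)) * TT n \<mu> (V i)))"
      by (simp add: sum_distrib_left sum.distrib algebra_simps)
    have e: "(\<Sum>i\<in>{1..m} - J. 2 * real (card (V i))) \<le> 2 * \<delta> * real n"
      using Jb by (simp add: sum_distrib_left[symmetric])
    have "\<delta> * (\<Sum>i\<in>J. real (card (V i))) + (\<Sum>i\<in>J. real (card (V i)) * TT n \<mu> (V i)) \<le> 2 * \<delta> * real n"
    proof -
      have "\<delta> * (\<Sum>i\<in>J. real (card (V i))) \<le> \<delta> * real n" by (rule mult_left_mono[OF a]) (use d in simp)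
      thus ?thesis using b by linarith
    qed
    hence "4 * ?C * (\<delta> * (\<Sum>i\<in>J. real (card (V i))) + (\<Sum>i\<in>J. real (card (V i)) * TT n \<mu> (V i))) \<le> 4 * ?C * (2 * \<delta> * real n)"
      by (intro mult_left_mono) auto
    thus ?thesis unfolding split c using e by (simp add: algebra_simps)
  qed
  show ?thesis using L QB by (simp only: mult.assoc)
qed


lemma joint_eq: "joint n \<mu> xs ws = expect n \<mu> (\<lambda>\<sigma>. if map \<sigma> xs = ws then 1 else 0)"
  unfolding joint_def expect_def by (simp add: sum.inter_filter[OF fin_cfg], intro sum.cong) auto

lemma joint_cons: "joint n \<mu> (x#xs) (w#ws) = AA n \<mu> (\<lambda>\<sigma>. if map \<sigma> xs = ws then 1 else 0) x w"
  unfolding joint_eq AA_def by (intro arg_cong[where f="expect n \<mu>"] ext) auto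

lemma marg_01: "0 \<le> marg n \<mu> x w"
  unfolding marg_AA using AA_01[of "\<lambda>_. 1"] by simp

lemma marg_sum: "(\<Sum>w\<in>(UNIV::'o set). marg n \<mu> x w) = 1"
  unfolding marg_AA sum_AA ex_const ..

lemma prod_marg_cons: "prod_marg n \<mu> (x#xs) (w#ws) = marg n \<mu> x w * prod_marg n \<mu> xs ws"
  unfolding prod_marg_def by (simp del: prod.lessThan_Suc add: prod.lessThan_Suc_shift)

lemma sum_words_Suc:
  "(\<Sum>v\<in>{ws::'o list. length ws = Suc j}. F v) = (\<Sum>ws\<in>{ws::'o list. length ws = j}. \<Sum>w\<in>UNIV. F (w#ws))"
proof -
  have e: "{ws::'o list. length ws = Suc j} = (\<lambda>(xs, n). n#xs) ` ({ws::'o list. length ws = j} \<times> UNIV)"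
    using lists_length_Suc_eq[of UNIV j] by simp
  have i: "inj_on (\<lambda>(xs, n). n#xs) ({ws::'o list. length ws = j} \<times> UNIV)"
    by (auto simp: inj_on_def)
  show ?thesis unfolding e sum.reindex[OF i] sum.cartesian_product by (auto intro!: sum.cong)
qed

lemma sum_lists_Suc:
  "(\<Sum>v\<in>{xs. set xs \<subseteq> A \<and> length xs = Suc j}. F v) = (\<Sum>xs\<in>{xs. set xs \<subseteq> A \<and> length xs = j}. \<Sum>x\<in>A. F (x#xs))"
proof -
  have i: "inj_on (\<lambda>(xs, n). n#xs) ({xs. set xs \<subseteq> A \<and> length xs = j} \<times> A)"
    by (auto simp: inj_on_def)
  show ?thesis unfolding lists_length_Suc_eq sum.reindex[OF i] sum.cartesian_product by (auto intro!: sum.cong)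
qed

lemma tv_step:
  "tv {ws::'o list. length ws = Suc j} (joint n \<mu> (x#xs)) (prod_marg n \<mu> (x#xs))
   \<le> 1/2 * (\<Sum>w\<in>UNIV. \<Sum>ws\<in>{ws::'o list. length ws = j}. \<bar>joint n \<mu> (x#xs) (w#ws) - marg n \<mu> x w * joint n \<mu> xs ws\<bar>)
     + tv {ws::'o list. length ws = j} (joint n \<mu> xs) (prod_marg n \<mu> xs)"
proof -
  have "(\<Sum>ws\<in>{ws::'o list. length ws = j}. \<Sum>w\<in>UNIV. \<bar>joint n \<mu> (x#xs) (w#ws) - prod_marg n \<mu> (x#xs) (w#ws)\<bar>)
     \<le> (\<Sum>ws\<in>{ws::'o list. length ws = j}. \<Sum>w\<in>UNIV. \<bar>joint n \<mu> (x#xs) (w#ws) - marg n \<mu> x w * joint n \<mu> xs ws\<bar>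
          + marg n \<mu> x w * \<bar>joint n \<mu> xs ws - prod_marg n \<mu> xs ws\<bar>)"
  proof (intro sum_mono)
    fix ws w
    have "joint n \<mu> (x#xs) (w#ws) - prod_marg n \<mu> (x#xs) (w#ws) = (joint n \<mu> (x#xs) (w#ws) - marg n \<mu> x w * joint n \<mu> xs ws) + marg n \<mu> x w * (joint n \<mu> xs ws - prod_marg n \<mu> xs ws)"
      by (simp add: prod_marg_cons algebra_simps)
    moreover have "\<bar>marg n \<mu> x w * (joint n \<mu> xs ws - prod_marg n \<mu> xs ws)\<bar> = marg n \<mu> x w * \<bar>joint n \<mu> xs ws - prod_marg n \<mu> xs ws\<bar>"
      using marg_01 by (simp add: abs_mult)
    ultimately show "\<bar>joint n \<mu> (x#xs) (w#ws) - prod_marg n \<mu> (x#xs) (w#ws)\<bar> \<le> \<bar>joint n \<mu> (x#xs) (w#ws) - marg n \<mu> x w * joint n \<mu> xs ws\<bar>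
          + marg n \<mu> x w * \<bar>joint n \<mu> xs ws - prod_marg n \<mu> xs ws\<bar>"
      by (metis abs_triangle_ineq)
  qed
  also have "\<dots> = (\<Sum>w\<in>UNIV. \<Sum>ws\<in>{ws::'o list. length ws = j}. \<bar>joint n \<mu> (x#xs) (w#ws) - marg n \<mu> x w * joint n \<mu> xs ws\<bar>)
       + (\<Sum>ws\<in>{ws::'o list. length ws = j}. \<bar>joint n \<mu> xs ws - prod_marg n \<mu> xs ws\<bar>)"
    by (simp add: sum.distrib sum_distrib_right[symmetric] marg_sum sum.swap[of _ UNIV])
  finally show ?thesis unfolding tv_def sum_words_Suc by simp
qed


lemma Dbound:
  assumes True
    and part: "is_partition n m V" and J: "J \<subseteq> {1..m}"
    and Jb: "real (\<Sum>i\<in>{1..m} - J. card (V i)) < \<delta> * real n"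
    and regJ: "\<forall>i\<in>J. regular_on n \<delta> \<mu> (V i)"
    and hyp: "(\<Sum>i\<in>{1..m}. real (card (V i)) / real n * TT n \<mu> (V i)) < \<delta>"
    and n: "n > 0" and d: "\<delta> > 0"
  shows "(\<Sum>x\<in>{1..n}. \<Sum>w\<in>UNIV. \<Sum>ws\<in>{ws::'o list. length ws = j}. \<bar>joint n \<mu> (x#xs) (w#ws) - marg n \<mu> x w * joint n \<mu> xs ws\<bar>)
     \<le> real (card (UNIV::'o set)) ^ j * (2 * (8 * real (card (UNIV::'o set)) + 2) * \<delta> * real n)"
proof -
  let ?W = "{ws::'o list. length ws = j}"
  let ?B = "2 * (8 * real (card (UNIV::'o set)) + 2) * \<delta> * real n"
  have fW: "finite ?W" and cW: "card ?W = card (UNIV::'o set) ^ j"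
    using finite_lists_length_eq[of "UNIV::'o set" j] card_lists_length_eq[of "UNIV::'o set" j] by auto
  have "(\<Sum>x\<in>{1..n}. \<Sum>w\<in>UNIV. \<Sum>ws\<in>?W. \<bar>joint n \<mu> (x#xs) (w#ws) - marg n \<mu> x w * joint n \<mu> xs ws\<bar>)
     = (\<Sum>x\<in>{1..n}. \<Sum>ws\<in>?W. \<Sum>w\<in>UNIV. \<bar>joint n \<mu> (x#xs) (w#ws) - marg n \<mu> x w * joint n \<mu> xs ws\<bar>)"
    by (intro sum.cong refl sum.swap)
  also have "\<dots> = (\<Sum>ws\<in>?W. \<Sum>x\<in>{1..n}. \<Sum>w\<in>UNIV. \<bar>joint n \<mu> (x#xs) (w#ws) - marg n \<mu> x w * joint n \<mu> xs ws\<bar>)"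
    by (rule sum.swap)
  also have "\<dots> \<le> (\<Sum>ws\<in>?W. ?B)"
  proof (rule sum_mono)
    fix ws assume "ws \<in> ?W"
    show "(\<Sum>x\<in>{1..n}. \<Sum>w\<in>UNIV. \<bar>joint n \<mu> (x#xs) (w#ws) - marg n \<mu> x w * joint n \<mu> xs ws\<bar>) \<le> ?B"
      unfolding joint_cons joint_eq[of xs ws]
      by (rule global[OF _ part J Jb regJ hyp n d]) simp
  qed
  also have "\<dots> = real (card (UNIV::'o set)) ^ j * ?B" using cW by simp
  finally show ?thesis .
qed

lemma Sbound:
  assumes True
    and part: "is_partition n m V" and J: "J \<subseteq> {1..m}"
    and Jb: "real (\<Sum>i\<in>{1..m} - J. card (V i)) < \<delta> * real n"
    and regJ: "\<forall>i\<in>J. regular_on n \<delta> \<mu> (V i)"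
    and hyp: "(\<Sum>i\<in>{1..m}. real (card (V i)) / real n * TT n \<mu> (V i)) < \<delta>"
    and n: "n > 0" and d: "\<delta> > 0"
  shows "(\<Sum>xs\<in>{xs. set xs \<subseteq> {1..n} \<and> length xs = j}. tv {ws::'o list. length ws = j} (joint n \<mu> xs) (prod_marg n \<mu> xs))
     \<le> real j * real n ^ j * real (card (UNIV::'o set)) ^ j * ((8 * real (card (UNIV::'o set)) + 2) * \<delta>)"
proof (induction j)
  case 0
  have "joint n \<mu> [] [] = 1" unfolding joint_eq by (simp add: ex_const)
  moreover have "{xs. set xs \<subseteq> {1..n} \<and> length xs = 0} = {[]}" by auto
  moreover have "{ws::'o list. length ws = 0} = {[]}" by auto
  ultimately show ?case by (simp add: tv_def prod_marg_def)
next
  case (Suc j)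
  let ?C = "real (card (UNIV::'o set))"
  let ?L = "{xs. set xs \<subseteq> {1..n} \<and> length xs = j}"
  let ?S = "\<lambda>xs. tv {ws::'o list. length ws = j} (joint n \<mu> xs) (prod_marg n \<mu> xs)"
  let ?D = "\<lambda>x xs. (\<Sum>w\<in>UNIV. \<Sum>ws\<in>{ws::'o list. length ws = j}. \<bar>joint n \<mu> (x#xs) (w#ws) - marg n \<mu> x w * joint n \<mu> xs ws\<bar>)"
  have C1: "?C \<ge> 1" by (simp add: Suc_le_eq card_gt_0_iff)
  have cL: "card ?L = n ^ j" using card_lists_length_eq[of "{1..n}" j] by simp
  have "(\<Sum>xs\<in>{xs. set xs \<subseteq> {1..n} \<and> length xs = Suc j}. tv {ws::'o list. length ws = Suc j} (joint n \<mu> xs) (prod_marg n \<mu> xs))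
     = (\<Sum>xs\<in>?L. \<Sum>x\<in>{1..n}. tv {ws::'o list. length ws = Suc j} (joint n \<mu> (x#xs)) (prod_marg n \<mu> (x#xs)))"
    by (rule sum_lists_Suc)
  also have "\<dots> \<le> (\<Sum>xs\<in>?L. \<Sum>x\<in>{1..n}. 1/2 * ?D x xs + ?S xs)"
    by (intro sum_mono tv_step)
  also have "\<dots> = (\<Sum>xs\<in>?L. 1/2 * (\<Sum>x\<in>{1..n}. ?D x xs) + real n * ?S xs)"
    by (simp add: sum.distrib sum_distrib_left)
  also have "\<dots> \<le> (\<Sum>xs\<in>?L. ?C ^ j * ((8 * ?C + 2) * \<delta> * real n) + real n * ?S xs)"
  proof (rule sum_mono)
    fix xs
    have "(\<Sum>x\<in>{1..n}. ?D x xs) \<le> ?C ^ j * (2 * (8 * ?C + 2) * \<delta> * real n)"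
      by (rule Dbound[OF _ part J Jb regJ hyp n d]) simp
    also have "\<dots> = 2 * (?C ^ j * ((8 * ?C + 2) * \<delta> * real n))" by (simp only: mult_ac)
    finally show "1/2 * (\<Sum>x\<in>{1..n}. ?D x xs) + real n * ?S xs \<le> ?C ^ j * ((8 * ?C + 2) * \<delta> * real n) + real n * ?S xs"
      by simp
  qed
  also have "\<dots> = real n ^ j * ?C ^ j * ((8 * ?C + 2) * \<delta> * real n) + real n * (\<Sum>xs\<in>?L. ?S xs)"
    using cL by (simp add: sum.distrib sum_distrib_left)
  also have "\<dots> \<le> real n ^ j * ?C ^ j * ((8 * ?C + 2) * \<delta> * real n) + real n * (real j * real n ^ j * ?C ^ j * ((8 * ?C + 2) * \<delta>))"
    using Suc.IH by (intro add_left_mono mult_left_mono) auto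
  also have "\<dots> = real (Suc j) * real n ^ Suc j * ?C ^ j * ((8 * ?C + 2) * \<delta>)"
    by (simp add: algebra_simps)
  also have "\<dots> \<le> real (Suc j) * real n ^ Suc j * ?C ^ Suc j * ((8 * ?C + 2) * \<delta>)"
  proof -
    have "?C ^ j \<le> ?C ^ Suc j" using C1 by simp
    moreover have "0 \<le> real (Suc j) * real n ^ Suc j" by simp
    moreover have "0 \<le> (8 * ?C + 2) * \<delta>" using d by simp
    ultimately show ?thesis by (intro mult_right_mono mult_left_mono) auto
  qed
  finally show ?case .
qed

end

theorem lemma2p8:
  fixes k :: nat and \<epsilon> :: real
  assumes "k \<ge> 2" and "\<epsilon> > 0"
  shows "\<exists>\<delta>>0. \<exists>n0. \<forall>n\<ge>n0. \<forall>(\<mu> :: (nat \<Rightarrow> 'o::finite) \<Rightarrow> real) m V.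
           is_prob n \<mu> \<longrightarrow> is_partition n m V \<longrightarrow> regular_wrt n \<delta> \<mu> m V \<longrightarrow>
           (\<Sum>i\<in>{1..m}. real (card (V i)) / real n *
              expect n \<mu> (\<lambda>\<sigma>. tv (UNIV :: 'o set) (frac \<sigma> (V i))
                 (\<lambda>\<omega>. expect n \<mu> (\<lambda>\<tau>. frac \<tau> (V i) \<omega>)))) < \<delta> \<longrightarrow>
           symmetric n \<epsilon> k \<mu>"
proof -
  let ?C = "real (card (UNIV::'o set))"
  define K where "K = real k * ?C ^ k * (8 * ?C + 2)"
  have C1: "?C \<ge> 1" by (simp add: Suc_le_eq card_gt_0_iff)
  have Kp: "K > 0" unfolding K_def using assms(1) C1 by (intro mult_pos_pos) auto
  define \<delta> where "\<delta> = \<epsilon> / (2 * K)"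
  have dp: "\<delta> > 0" unfolding \<delta>_def using Kp assms(2) by simp
  show ?thesis
  proof (intro exI[of _ \<delta>] conjI dp exI[of _ 0] allI impI)
    fix n :: nat and \<mu> :: "(nat \<Rightarrow> 'o) \<Rightarrow> real" and m V
    assume prob: "is_prob n \<mu>" and part: "is_partition n m V" and reg: "regular_wrt n \<delta> \<mu> m V"
      and h0: "(\<Sum>i\<in>{1..m}. real (card (V i)) / real n *
              expect n \<mu> (\<lambda>\<sigma>. tv (UNIV :: 'o set) (frac \<sigma> (V i))
                 (\<lambda>\<omega>. expect n \<mu> (\<lambda>\<tau>. frac \<tau> (V i) \<omega>)))) < \<delta>"
    show "symmetric n \<epsilon> k \<mu>"
    proof (cases "n = 0")
      case True
      have "real n ^ k = 0" using True assms(1) by simp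
      have k0: "k \<noteq> 0" using assms(1) by simp
      show ?thesis using assms True k0 unfolding symmetric_def by (simp add: power_0_left)
    next
      case False
      hence n: "n > 0" by simp
      obtain J where J: "J \<subseteq> {1..m}" and Jb: "real (\<Sum>i\<in>{1..m} - J. card (V i)) < \<delta> * real n"
        and regJ: "\<forall>i\<in>J. regular_on n \<delta> \<mu> (V i)"
        using reg unfolding regular_wrt_def by blast
      have hyp: "(\<Sum>i\<in>{1..m}. real (card (V i)) / real n * TT n \<mu> (V i)) < \<delta>"
        using h0 unfolding TT_def mbar_def .
      have S: "(\<Sum>xs\<in>{xs. set xs \<subseteq> {1..n} \<and> length xs = k}. tv {ws::'o list. length ws = k} (joint n \<mu> xs) (prod_marg n \<mu> xs))
         \<le> real k * real n ^ k * ?C ^ k * ((8 * ?C + 2) * \<delta>)"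
        by (rule Sbound[OF prob _ part J Jb regJ hyp n dp]) simp
      also have "\<dots> = real n ^ k * (K * \<delta>)" unfolding K_def by (simp only: mult_ac)
      also have "\<dots> = real n ^ k * (\<epsilon> / 2)" unfolding \<delta>_def using Kp by simp
      finally have S2: "(\<Sum>xs\<in>{xs. set xs \<subseteq> {1..n} \<and> length xs = k}. tv {ws::'o list. length ws = k} (joint n \<mu> xs) (prod_marg n \<mu> xs))
         \<le> real n ^ k * (\<epsilon> / 2)" .
      have np: "real n ^ k > 0" using n by simp
      have "(1 / real n ^ k) * (\<Sum>xs\<in>{xs. set xs \<subseteq> {1..n} \<and> length xs = k}. tv {ws::'o list. length ws = k} (joint n \<mu> xs) (prod_marg n \<mu> xs))
         \<le> (1 / real n ^ k) * (real n ^ k * (\<epsilon> / 2))"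
        using S2 np by (intro mult_left_mono) auto
      also have "\<dots> = \<epsilon> / 2" using np by simp
      also have "\<dots> < \<epsilon>" using assms by simp
      finally show ?thesis unfolding symmetric_def .
    qed
  qed
qed

end
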